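(* Let $G$ be a finite simple connected graph. If $c_{\infty}(G)=1$ then $G$ has no hallway.
   Context: Cops and Robber with an infinitely fast robber: the game is played on a graph $G$. A set of cops first choose initial vertices (several cops may share a vertex); then the robber, knowing their positions, chooses a vertex. Then the players move in alternating rounds, cops first. In the cops' turn each cop either stays or moves to an adjacent vertex; in the robber's turn she either stays or moves along any path of $G$ starting at her current vertex that contains no vertex currently occupied by a cop. The cops win if at some point a cop moves to the vertex occupied by the robber. $c_{\infty}(G)$ is the minimum number of cops for which the cops have a strategy that guarantees a win. A block of $G$ is either a maximal 2-connected subgraph or an edge not contained in any 2-connected subgraph. The block tree $B(G)$ is the bipartite tree whose vertices are the blocks and cut vertices of $G$, a block $B$ adjacent to a cut vertex $v$ iff $v\in V(B)$. If $u$ is a cut vertex and $B$ a block containing $u$ such that some vertex of $B$ is neither $u$ nor adjacent to $u$, then $(B,u)$ is a directed hole. For distinct blocks $B,B'$ with unique $(B,B')$-path $B\,u_1\cdots u_k\,B'$ in $B(G)$, $\{B,B'\}$ is a hallway if $(B,u_1)$ and $(B',u_k)$ are both directed holes. *)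

theory Defs
  imports Main
begin

definition simple_graph :: "'a set \<Rightarrow> ('a \<Rightarrow> 'a \<Rightarrow> bool) \<Rightarrow> bool" where
  "simple_graph V E \<longleftrightarrow> finite V \<and> (\<forall>x y. E x y \<longrightarrow> x \<in> V \<and> y \<in> V)
     \<and> (\<forall>x y. E x y \<longrightarrow> E y x) \<and> (\<forall>x. \<not> E x x)"

definition connected_on :: "('a \<Rightarrow> 'a \<Rightarrow> bool) \<Rightarrow> 'a set \<Rightarrow> bool" where
  "connected_on E S \<longleftrightarrow> (\<forall>x\<in>S. \<forall>y\<in>S. (\<lambda>a b. E a b \<and> a \<in> S \<and> b \<in> S)\<^sup>*\<^sup>* x y)"

definition connected_graph :: "'a set \<Rightarrow> ('a \<Rightarrow> 'a \<Rightarrow> bool) \<Rightarrow> bool" where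
  "connected_graph V E \<longleftrightarrow> V \<noteq> {} \<and> connected_on E V"

definition cop_move :: "('a \<Rightarrow> 'a \<Rightarrow> bool) \<Rightarrow> 'a list \<Rightarrow> 'a list \<Rightarrow> bool" where
  "cop_move E C C' \<longleftrightarrow> length C' = length C \<and>
     (\<forall>i < length C. C' ! i = C ! i \<or> E (C ! i) (C' ! i))"

definition robber_move :: "('a \<Rightarrow> 'a \<Rightarrow> bool) \<Rightarrow> 'a list \<Rightarrow> 'a \<Rightarrow> 'a \<Rightarrow> bool" where
  "robber_move E C r r' \<longleftrightarrow>
     (\<lambda>a b. E a b \<and> a \<notin> set C \<and> b \<notin> set C)\<^sup>*\<^sup>* r r'"

text \<open>cop_wins_from E C r: cops at C, robber at r, robber to move; the cops can force a
  capture (least fixed point = win in finitely many rounds against every robber play).\<close>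
inductive cop_wins_from :: "('a \<Rightarrow> 'a \<Rightarrow> bool) \<Rightarrow> 'a list \<Rightarrow> 'a \<Rightarrow> bool"
  for E :: "'a \<Rightarrow> 'a \<Rightarrow> bool" where
  step: "(\<And>r'. robber_move E C r r' \<Longrightarrow>
            (\<exists>C'. cop_move E C C' \<and> (r' \<in> set C' \<or> cop_wins_from E C' r')))
         \<Longrightarrow> cop_wins_from E C r"

definition cops_win :: "'a set \<Rightarrow> ('a \<Rightarrow> 'a \<Rightarrow> bool) \<Rightarrow> nat \<Rightarrow> bool" where
  "cops_win V E k \<longleftrightarrow> (\<exists>C. length C = k \<and> set C \<subseteq> V \<and>
     (\<forall>r \<in> V - set C. \<exists>C'. cop_move E C C' \<and> (r \<in> set C' \<or> cop_wins_from E C' r)))"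

definition cop_number_inf :: "'a set \<Rightarrow> ('a \<Rightarrow> 'a \<Rightarrow> bool) \<Rightarrow> nat" where
  "cop_number_inf V E = (LEAST k. cops_win V E k)"

definition two_connected_on :: "('a \<Rightarrow> 'a \<Rightarrow> bool) \<Rightarrow> 'a set \<Rightarrow> bool" where
  "two_connected_on E S \<longleftrightarrow> finite S \<and> card S \<ge> 3 \<and> connected_on E S \<and>
     (\<forall>x\<in>S. connected_on E (S - {x}))"

text \<open>Blocks, identified with their vertex sets (a maximal 2-connected subgraph is induced).\<close>
definition is_block :: "'a set \<Rightarrow> ('a \<Rightarrow> 'a \<Rightarrow> bool) \<Rightarrow> 'a set \<Rightarrow> bool" where
  "is_block V E B \<longleftrightarrow>
     (B \<subseteq> V \<and> two_connected_on E B \<and>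
        (\<forall>S. B \<subseteq> S \<and> S \<subseteq> V \<and> two_connected_on E S \<longrightarrow> S = B))
   \<or> (\<exists>u v. B = {u, v} \<and> E u v \<and>
        \<not> (\<exists>S. S \<subseteq> V \<and> two_connected_on E S \<and> u \<in> S \<and> v \<in> S))"

definition is_cut_vertex :: "'a set \<Rightarrow> ('a \<Rightarrow> 'a \<Rightarrow> bool) \<Rightarrow> 'a \<Rightarrow> bool" where
  "is_cut_vertex V E v \<longleftrightarrow> v \<in> V \<and> \<not> connected_on E (V - {v})"

text \<open>Adjacency in the block tree; nodes are blocks (Inl) and cut vertices (Inr).\<close>
definition bt_adj :: "'a set \<Rightarrow> ('a \<Rightarrow> 'a \<Rightarrow> bool) \<Rightarrow> ('a set + 'a) \<Rightarrow> ('a set + 'a) \<Rightarrow> bool" where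
  "bt_adj V E x y \<longleftrightarrow>
     (\<exists>B v. is_block V E B \<and> is_cut_vertex V E v \<and> v \<in> B \<and>
        ((x = Inl B \<and> y = Inr v) \<or> (x = Inr v \<and> y = Inl B)))"

definition bt_path :: "'a set \<Rightarrow> ('a \<Rightarrow> 'a \<Rightarrow> bool) \<Rightarrow> ('a set + 'a) list \<Rightarrow> bool" where
  "bt_path V E p \<longleftrightarrow> p \<noteq> [] \<and> distinct p \<and>
     (\<forall>i. Suc i < length p \<longrightarrow> bt_adj V E (p ! i) (p ! Suc i))"

definition directed_hole :: "'a set \<Rightarrow> ('a \<Rightarrow> 'a \<Rightarrow> bool) \<Rightarrow> 'a set \<Rightarrow> 'a \<Rightarrow> bool" where
  "directed_hole V E B u \<longleftrightarrow> is_cut_vertex V E u \<and> is_block V E B \<and> u \<in> B \<and>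
     (\<exists>w\<in>B. w \<noteq> u \<and> \<not> E u w)"

text \<open>{B,B'} is a hallway: B, B' distinct blocks whose (unique) block-tree path
  B u_1 ... u_k B' has (B,u_1) and (B',u_k) directed holes.\<close>
definition is_hallway :: "'a set \<Rightarrow> ('a \<Rightarrow> 'a \<Rightarrow> bool) \<Rightarrow> 'a set \<Rightarrow> 'a set \<Rightarrow> bool" where
  "is_hallway V E B B' \<longleftrightarrow> is_block V E B \<and> is_block V E B' \<and> B \<noteq> B' \<and>
     (\<exists>p u1 uk. bt_path V E p \<and> hd p = Inl B \<and> last p = Inl B' \<and>
        p ! 1 = Inr u1 \<and> p ! (length p - 2) = Inr uk \<and>
        directed_hole V E B u1 \<and> directed_hole V E B' uk)"

definition has_hallway :: "'a set \<Rightarrow> ('a \<Rightarrow> 'a \<Rightarrow> bool) \<Rightarrow> bool" where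
  "has_hallway V E \<longleftrightarrow> (\<exists>B B'. is_hallway V E B B')"

end

theory Submission
  imports Defs
begin


definition biconn :: "('a \<Rightarrow> 'a \<Rightarrow> bool) \<Rightarrow> 'a set \<Rightarrow> bool" where
  "biconn E S \<longleftrightarrow> connected_on E S \<and> (\<forall>x\<in>S. connected_on E (S - {x}))"

lemma rel_mono_gen: "(\<And>a b. r a b \<Longrightarrow> s a b) \<Longrightarrow> r\<^sup>*\<^sup>* x y \<Longrightarrow> s\<^sup>*\<^sup>* x y"
  by (metis mono_rtranclp)

lemma conn_mono_rel: "S \<subseteq> T \<Longrightarrow> (\<lambda>a b. E a b \<and> a \<in> S \<and> b \<in> S)\<^sup>*\<^sup>* x y
   \<Longrightarrow> (\<lambda>a b. E a b \<and> a \<in> T \<and> b \<in> T)\<^sup>*\<^sup>* x y"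
  by (erule rel_mono_gen[rotated]) auto

lemma biconn_minus: "biconn E S \<Longrightarrow> connected_on E (S - {z})"
  by (cases "z \<in> S") (auto simp: biconn_def)

lemma family_conn:
  assumes conn: "\<And>a. a \<in> I \<Longrightarrow> connected_on E (F a)"
    and Rl: "\<And>a b. R a b \<Longrightarrow> a \<in> I \<and> b \<in> I \<and> F a \<inter> F b \<noteq> {}"
    and r: "R\<^sup>*\<^sup>* a b" and aI: "a \<in> I" and x: "x \<in> F a" and y: "y \<in> F b"
  shows "(\<lambda>u v. E u v \<and> u \<in> \<Union>(F ` I) \<and> v \<in> \<Union>(F ` I))\<^sup>*\<^sup>* x y"
  using r y
proof (induction arbitrary: y rule: rtranclp_induct)
  case base
  have sub: "F a \<subseteq> \<Union>(F ` I)" using aI by auto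
  have "(\<lambda>u v. E u v \<and> u \<in> F a \<and> v \<in> F a)\<^sup>*\<^sup>* x y"
    using conn[OF aI] x base unfolding connected_on_def by blast
  then show ?case by (rule conn_mono_rel[OF sub])
next
  case (step b c)
  from Rl[OF step.hyps(2)] obtain q where q: "q \<in> F b" "q \<in> F c" and cI: "c \<in> I" by auto
  have 1: "(\<lambda>u v. E u v \<and> u \<in> \<Union>(F ` I) \<and> v \<in> \<Union>(F ` I))\<^sup>*\<^sup>* x q" using step.IH q(1) .
  have sub: "F c \<subseteq> \<Union>(F ` I)" using cI by auto
  have "(\<lambda>u v. E u v \<and> u \<in> F c \<and> v \<in> F c)\<^sup>*\<^sup>* q y"
    using conn[OF cI] q(2) step.prems unfolding connected_on_def by blast
  then have 2: "(\<lambda>u v. E u v \<and> u \<in> \<Union>(F ` I) \<and> v \<in> \<Union>(F ` I))\<^sup>*\<^sup>* q y"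
    by (rule conn_mono_rel[OF sub])
  show ?case using 1 2 by (rule rtranclp_trans)
qed

lemma chain_reach: "(\<And>t. a \<le> t \<Longrightarrow> t < b \<Longrightarrow> R t (Suc t)) \<Longrightarrow> a \<le> b \<Longrightarrow> R\<^sup>*\<^sup>* a b"
proof (induction b)
  case 0 then show ?case by auto
next
  case (Suc b)
  show ?case
  proof (cases "a = Suc b")
    case True then show ?thesis by auto
  next
    case False
    then have "a \<le> b" using Suc.prems by auto
    then have "R\<^sup>*\<^sup>* a b" using Suc by auto
    moreover have "R b (Suc b)" using Suc.prems \<open>a \<le> b\<close> by auto
    ultimately show ?thesis by (rule rtranclp.rtrancl_into_rtrancl)
  qed
qed

lemma sym_rtranclp: "(\<And>a b. R a b \<Longrightarrow> R b a) \<Longrightarrow> R\<^sup>*\<^sup>* a b \<Longrightarrow> R\<^sup>*\<^sup>* b a"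
  by (erule rtranclp_induct) (auto intro: converse_rtranclp_into_rtranclp)

lemma ring_conn:
  assumes conn: "\<And>a. a < n \<Longrightarrow> connected_on E (F a)" and i0: "i0 < n"
    and link: "\<And>a. a < n \<Longrightarrow> a \<noteq> i0 \<Longrightarrow> F a \<inter> F (Suc a mod n) \<noteq> {}"
  shows "connected_on E (\<Union>a\<in>{..<n}. F a)"
proof -
  define R where "R a b \<longleftrightarrow> a < n \<and> b < n \<and> ((b = Suc a mod n \<and> a \<noteq> i0) \<or> (a = Suc b mod n \<and> b \<noteq> i0))" for a b
  have Rl: "a \<in> {..<n} \<and> b \<in> {..<n} \<and> F a \<inter> F b \<noteq> {}" if "R a b" for a b
    using link that unfolding R_def by (auto simp: Int_commute)
  have Rs: "R a b \<Longrightarrow> R b a" for a b unfolding R_def by auto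
  have reach: "R\<^sup>*\<^sup>* a i0" if "a < n" for a
  proof (cases "a \<le> i0")
    case True
    show ?thesis by (rule chain_reach[OF _ True]) (use i0 in \<open>auto simp: R_def\<close>)
  next
    case False
    have "R\<^sup>*\<^sup>* a (n-1)" by (rule chain_reach) (use False that in \<open>auto simp: R_def\<close>)
    moreover have "R (n-1) 0" using False that unfolding R_def by auto
    moreover have "R\<^sup>*\<^sup>* 0 i0" by (rule chain_reach) (use i0 in \<open>auto simp: R_def\<close>)
    ultimately show ?thesis by (meson rtranclp.rtrancl_into_rtrancl rtranclp_trans)
  qed
  show ?thesis unfolding connected_on_def
  proof (intro ballI)
    fix x y assume "x \<in> (\<Union>a\<in>{..<n}. F a)" "y \<in> (\<Union>a\<in>{..<n}. F a)"
    then obtain a b where ab: "a < n" "x \<in> F a" "b < n" "y \<in> F b" by auto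
    have "R\<^sup>*\<^sup>* a b" using reach[OF ab(1)] sym_rtranclp[OF Rs reach[OF ab(3)]]
      by (rule rtranclp_trans)
    from family_conn[where I="{..<n}", OF conn Rl this _ ab(2) ab(4)] ab(1)
    show "(\<lambda>u v. E u v \<and> u \<in> (\<Union>a\<in>{..<n}. F a) \<and> v \<in> (\<Union>a\<in>{..<n}. F a))\<^sup>*\<^sup>* x y" by auto
  qed
qed




lemma conn_single: "S \<subseteq> {v} \<Longrightarrow> connected_on E S"
  by (auto simp: connected_on_def)

lemma edge_biconn:
  assumes sg: "simple_graph V E" and e: "E a b" shows "biconn E {a,b}"
proof -
  have ba: "E b a" using sg e by (auto simp: simple_graph_def)
  have "connected_on E {a,b}" unfolding connected_on_def
    using e ba by (auto intro: r_into_rtranclp)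
  moreover have "connected_on E ({a,b} - {x})" if "x \<in> {a,b}" for x
    by (rule conn_single[where v="if x = a then b else a"]) (use that in auto)
  ultimately show ?thesis by (auto simp: biconn_def)
qed

lemma edge_sub: "simple_graph V E \<Longrightarrow> E a b \<Longrightarrow> {a,b} \<subseteq> V"
  by (auto simp: simple_graph_def)

lemma block_sub: "simple_graph V E \<Longrightarrow> is_block V E B \<Longrightarrow> B \<subseteq> V"
  by (auto simp: is_block_def simple_graph_def)

lemma block_biconn: assumes sg: "simple_graph V E" and b: "is_block V E B" shows "biconn E B"
  using b unfolding is_block_def
proof (elim disjE exE conjE)
  assume "two_connected_on E B" then show ?thesis by (simp add: two_connected_on_def biconn_def)
next
  fix u v assume "B = {u,v}" "E u v" then show ?thesis using edge_biconn[OF sg] by simp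
qed

lemma nest:
  assumes sg: "simple_graph V E" and A: "is_block V E A" and B: "is_block V E B"
    and ne: "A \<noteq> B" and sub: "B \<subseteq> A"
  shows False
  using A unfolding is_block_def
proof (elim disjE exE conjE)
  assume AV: "A \<subseteq> V" and tA: "two_connected_on E A"
    and mA: "\<forall>S. A \<subseteq> S \<and> S \<subseteq> V \<and> two_connected_on E S \<longrightarrow> S = A"
  from B show False unfolding is_block_def
  proof (elim disjE exE conjE)
    assume "\<forall>S. B \<subseteq> S \<and> S \<subseteq> V \<and> two_connected_on E S \<longrightarrow> S = B"
    then have "A = B" using AV tA sub by simp
    then show False using ne by simp
  next
    fix c d assume "B = {c,d}" "\<not> (\<exists>S. S \<subseteq> V \<and> two_connected_on E S \<and> c \<in> S \<and> d \<in> S)"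
    then show False using AV tA sub by auto
  qed
next
  fix a b assume Aab: "A = {a,b}" and eab: "E a b"
  from B show False unfolding is_block_def
  proof (elim disjE exE conjE)
    assume "two_connected_on E B"
    then have "card B \<ge> 3" by (auto simp: two_connected_on_def)
    moreover have "card B \<le> card {a,b}" using sub Aab by (intro card_mono) auto
    moreover have "card {a,b} \<le> 2" by (simp add: card_insert_le_m1)
    ultimately show False by linarith
  next
    fix c d assume "B = {c,d}" "E c d"
    moreover have "c \<noteq> d" "a \<noteq> b" using sg \<open>E c d\<close> eab by (auto simp: simple_graph_def)
    ultimately show False using sub Aab ne by auto
  qed
qed

lemma ring:
  assumes sg: "simple_graph V E" and n2: "2 \<le> n"
    and bic: "\<And>a. a < n \<Longrightarrow> biconn E (X a)" and sub: "\<And>a. a < n \<Longrightarrow> X a \<subseteq> V"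
    and jin1: "\<And>a. a < n \<Longrightarrow> j a \<in> X a" and jin2: "\<And>a. a < n \<Longrightarrow> j a \<in> X (Suc a mod n)"
    and inj: "inj_on j {..<n}"
    and b0: "is_block V E (X 0)" and b1: "is_block V E (X 1)" and ne: "X 0 \<noteq> X 1"
  shows False
proof -
  define U where "U = (\<Union>a\<in>{..<n}. X a)"
  have UV: "U \<subseteq> V" using sub unfolding U_def by auto
  have fin: "finite U" using sg UV finite_subset unfolding simple_graph_def by blast
  have cU: "connected_on E U" unfolding U_def
  proof (rule ring_conn[where ?i0.0=0])
    fix a assume a: "a < n"
    then show "connected_on E (X a)" using bic by (simp add: biconn_def)
    have "j a \<in> X a \<inter> X (Suc a mod n)" using jin1[OF a] jin2[OF a] by blast
    then show "X a \<inter> X (Suc a mod n) \<noteq> {}" by blast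
  qed (use n2 in auto)
  have cUz: "connected_on E (U - {z})" for z
  proof -
    obtain i0 where i0: "i0 < n" "\<And>a. a < n \<Longrightarrow> a \<noteq> i0 \<Longrightarrow> j a \<noteq> z"
    proof (cases "\<exists>i<n. j i = z")
      case True
      then obtain i where "i < n" "j i = z" by auto
      then show ?thesis using inj by (intro that[of i]) (auto simp: inj_on_def)
    next
      case False then show ?thesis using n2 by (intro that[of 0]) auto
    qed
    have "U - {z} = (\<Union>a\<in>{..<n}. X a - {z})" unfolding U_def by blast
    also have "connected_on E \<dots>"
    proof (rule ring_conn[where F="\<lambda>a. X a - {z}", OF _ i0(1)])
      fix a assume "a < n" then show "connected_on E (X a - {z})" by (rule biconn_minus[OF bic])
    next
      fix a assume a: "a < n" "a \<noteq> i0"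
      have "j a \<noteq> z" using i0(2)[OF a] .
      then have "j a \<in> (X a - {z}) \<inter> (X (Suc a mod n) - {z})" using jin1[OF a(1)] jin2[OF a(1)] by simp
      then show "(X a - {z}) \<inter> (X (Suc a mod n) - {z}) \<noteq> {}" by (metis empty_iff)
    qed
    finally show ?thesis .
  qed
  have X0U: "X 0 \<subseteq> U" using n2 unfolding U_def by (intro UN_upper) auto
  have X1U: "X 1 \<subseteq> U" using n2 unfolding U_def by (intro UN_upper) auto
  show False
  proof (cases "card U \<ge> 3")
    case True
    then have tc: "two_connected_on E U" using fin cU cUz unfolding two_connected_on_def by auto
    from b0 show False unfolding is_block_def
    proof (elim disjE exE conjE)
      assume "\<forall>S. X 0 \<subseteq> S \<and> S \<subseteq> V \<and> two_connected_on E S \<longrightarrow> S = X 0"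
      then have "U = X 0" using tc UV X0U by simp
      then have "X 1 \<subseteq> X 0" using X1U by auto
      then show False using nest[OF sg b0 b1 ne] by blast
    next
      fix u v assume "X 0 = {u,v}" "\<not> (\<exists>S. S \<subseteq> V \<and> two_connected_on E S \<and> u \<in> S \<and> v \<in> S)"
      moreover have "U \<subseteq> V \<and> two_connected_on E U \<and> u \<in> U \<and> v \<in> U"
        using tc UV X0U \<open>X 0 = {u,v}\<close> by auto
      ultimately show False by blast
    qed
  next
    case False
    have "j ` {..<n} \<subseteq> U" using jin1 unfolding U_def by auto
    then have "card (j ` {..<n}) \<le> card U" using fin by (intro card_mono) auto
    then have "n \<le> card U" using card_image[OF inj] by simp
    then have n: "n = 2" using False n2 by linarith
    have d: "j 0 \<noteq> j 1" 
    proof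
      assume "j 0 = j 1"
      moreover have "(0::nat) \<in> {..<n}" "(1::nat) \<in> {..<n}" using n by auto
      ultimately have "(0::nat) = 1" using inj unfolding inj_on_def by blast
      then show False by simp
    qed
    have s0: "{j 0, j 1} \<subseteq> X 0" using jin1[of 0] jin2[of 1] n by auto
    have s1: "{j 0, j 1} \<subseteq> X 1" using jin1[of 1] jin2[of 0] n by auto
    have "card {j 0, j 1} = 2" using d by simp
    have "{j 0, j 1} \<subseteq> U" using s0 X0U by auto
    then have "{j 0, j 1} = U" using fin False \<open>card {j 0, j 1} = 2\<close>
      by (intro card_seteq[OF fin]) auto
    then have "X 0 = U" "X 1 = U" using s0 s1 X0U X1U by (simp_all add: subset_antisym)
    then show False using ne by simp
  qed
qed




definition chain :: "'a set \<Rightarrow> ('a \<Rightarrow> 'a \<Rightarrow> bool) \<Rightarrow> nat \<Rightarrow> (nat \<Rightarrow> 'a set) \<Rightarrow> (nat \<Rightarrow> 'a) \<Rightarrow> bool" where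
  "chain V E k X j \<longleftrightarrow> 1 \<le> k \<and> (\<forall>i\<le>k. is_block V E (X i)) \<and> inj_on X {..k} \<and> inj_on j {..<k}
     \<and> (\<forall>i<k. j i \<in> X i \<and> j i \<in> X (Suc i))"

lemma chain_X01: "chain V E k X j \<Longrightarrow> X 0 \<noteq> X 1"
proof
  assume ch: "chain V E k X j" and eq: "X 0 = X 1"
  have "(0::nat) \<in> {..k}" "(1::nat) \<in> {..k}" using ch by (auto simp: chain_def)
  then have "(0::nat) = 1" using ch eq unfolding chain_def inj_on_def by blast
  then show False by simp
qed

lemma D_lemma:
  assumes sg: "simple_graph V E" and ch: "chain V E k X j" and i: "1 \<le> i" "i < k" and ji: "j i \<in> X 0"
  shows False
proof -
  have n2: "2 \<le> Suc i" using i by simp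
  have bl: "a < Suc i \<Longrightarrow> is_block V E (X a)" for a using ch i by (auto simp: chain_def)
  have bic: "a < Suc i \<Longrightarrow> biconn E (X a)" for a using bl block_biconn[OF sg] by blast
  have sub: "a < Suc i \<Longrightarrow> X a \<subseteq> V" for a using bl block_sub[OF sg] by blast
  have jin1: "a < Suc i \<Longrightarrow> j a \<in> X a" for a using ch i by (auto simp: chain_def)
  have jin2: "j a \<in> X (Suc a mod Suc i)" if a: "a < Suc i" for a
  proof (cases "a < i")
    case True
    then have "Suc a mod Suc i = Suc a" by simp
    then show ?thesis using ch i True by (auto simp: chain_def)
  next
    case False
    then have "a = i" using a by simp
    then show ?thesis using ji by simp
  qed
  have inj: "inj_on j {..<Suc i}"
    using ch i unfolding chain_def by (auto intro: inj_on_subset)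
  have b0: "is_block V E (X 0)" and b1: "is_block V E (X 1)" using bl i by auto
  show False using ring[OF sg n2 bic sub jin1 jin2 inj b0 b1 chain_X01[OF ch]] by blast
qed

lemma rev_chain:
  assumes ch: "chain V E k X j" shows "chain V E k (\<lambda>i. X (k - i)) (\<lambda>i. j (k - Suc i))"
  unfolding chain_def
proof (intro conjI allI impI)
  show "1 \<le> k" using ch by (simp add: chain_def)
next
  fix i assume "i \<le> k" then show "is_block V E (X (k - i))" using ch by (simp add: chain_def)
next
  show "inj_on (\<lambda>i. X (k - i)) {..k}"
  proof (rule inj_onI)
    fix a b assume "a \<in> {..k}" "b \<in> {..k}" "X (k - a) = X (k - b)"
    moreover have "k - a \<in> {..k}" "k - b \<in> {..k}" by auto
    ultimately have "k - a = k - b" using ch unfolding chain_def inj_on_def by blast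
    then show "a = b" using \<open>a \<in> {..k}\<close> \<open>b \<in> {..k}\<close> by auto
  qed
next
  show "inj_on (\<lambda>i. j (k - Suc i)) {..<k}"
  proof (rule inj_onI)
    fix a b assume "a \<in> {..<k}" "b \<in> {..<k}" "j (k - Suc a) = j (k - Suc b)"
    moreover have "k - Suc a \<in> {..<k}" "k - Suc b \<in> {..<k}" using \<open>a \<in> {..<k}\<close> \<open>b \<in> {..<k}\<close> by auto
    ultimately have "k - Suc a = k - Suc b" using ch unfolding chain_def inj_on_def by blast
    then show "a = b" using \<open>a \<in> {..<k}\<close> \<open>b \<in> {..<k}\<close> by auto
  qed
next
  fix i assume i: "i < k"
  have t: "k - Suc i < k" "Suc (k - Suc i) = k - i" using i by auto
  then show "j (k - Suc i) \<in> X (k - i)" using ch unfolding chain_def by metis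
  show "j (k - Suc i) \<in> X (k - Suc i)" using ch t unfolding chain_def by blast
qed

lemma D'_lemma:
  assumes sg: "simple_graph V E" and ch: "chain V E k X j" and i: "i < k - 1" and ji: "j i \<in> X k"
  shows False
proof -
  have "j (k - Suc (k - Suc i)) = j i" using i by (simp add: Suc_diff_Suc)
  moreover have "1 \<le> k - Suc i" "k - Suc i < k" using i by auto
  ultimately show False using D_lemma[OF sg rev_chain[OF ch], of "k - Suc i"] ji by simp
qed




context
  fixes V :: "'a set" and E k X j w w'
  assumes sg: "simple_graph V E" and ch: "chain V E k X j"
    and w0: "w \<in> X 0" and w1: "w \<noteq> j 0" and w2: "\<not> E (j 0) w"
    and v0: "w' \<in> X k" and v1: "w' \<noteq> j (k-1)" and v2: "\<not> E (j (k-1)) w'"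
begin

lemma kpos: "1 \<le> k" using ch by (simp add: chain_def)
lemma blk: "i \<le> k \<Longrightarrow> is_block V E (X i)" using ch by (simp add: chain_def)
lemma bic: "i \<le> k \<Longrightarrow> biconn E (X i)" using blk block_biconn[OF sg] by blast
lemma sub: "i \<le> k \<Longrightarrow> X i \<subseteq> V" using blk block_sub[OF sg] by blast
lemma jX: "i < k \<Longrightarrow> j i \<in> X i" using ch by (simp add: chain_def)
lemma jX': "i < k \<Longrightarrow> j i \<in> X (Suc i)" using ch by (simp add: chain_def)
lemma injj: "a < k \<Longrightarrow> b < k \<Longrightarrow> j a = j b \<Longrightarrow> a = b" using ch by (auto simp: chain_def inj_on_def)
lemma Esym: "E a b \<Longrightarrow> E b a" using sg by (simp add: simple_graph_def)
lemma Eirr: "\<not> E a a" using sg by (simp add: simple_graph_def)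
lemma X01: "X 0 \<noteq> X 1" using chain_X01[OF ch] .
lemma b0: "is_block V E (X 0)" using blk by simp
lemma b1: "is_block V E (X 1)" using blk kpos by simp

lemma wj: "a < k \<Longrightarrow> w \<noteq> j a"
  using w1 w0 D_lemma[OF sg ch, of a] by (cases "a = 0") auto

lemma vj: "a < k \<Longrightarrow> w' \<noteq> j a"
proof
  assume a: "a < k" and e: "w' = j a"
  show False
  proof (cases "a = k - 1")
    case True then show False using v1 e by simp
  next
    case False then have "a < k - 1" using a by simp
    then show False using D'_lemma[OF sg ch] v0 e by blast
  qed
qed

lemma W: "w \<noteq> w'"
proof
  assume eq: "w = w'"
  define j2 where "j2 a = (if a < k then j a else w)" for a
  have n2: "2 \<le> Suc k" using kpos by simp
  have bc: "a < Suc k \<Longrightarrow> biconn E (X a)" for a using bic by simp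
  have sb: "a < Suc k \<Longrightarrow> X a \<subseteq> V" for a using sub by simp
  have jin1: "a < Suc k \<Longrightarrow> j2 a \<in> X a" for a using jX v0 eq by (auto simp: j2_def less_Suc_eq)
  have jin2: "j2 a \<in> X (Suc a mod Suc k)" if a: "a < Suc k" for a
  proof (cases "a < k")
    case True then show ?thesis using jX' by (simp add: j2_def)
  next
    case False then have "a = k" using a by simp
    then show ?thesis using w0 by (simp add: j2_def)
  qed
  have inj: "inj_on j2 {..<Suc k}"
  proof (rule inj_onI)
    fix a b assume a: "a \<in> {..<Suc k}" and b: "b \<in> {..<Suc k}" and e: "j2 a = j2 b"
    have ca: "a < k \<or> a = k" and cb: "b < k \<or> b = k" using a b by auto
    show "a = b" using ca cb e injj[of a b] wj[of a] wj[of b] by (auto simp: j2_def)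
  qed
  show False using ring[OF sg n2 bc sb jin1 jin2 inj b0 b1 X01] .
qed

definition J where "J a = (if a < k then j a else w')"

lemma F2notJ:
  assumes e: "E w c" and m: "m \<le> k" and cJ: "c = J m" shows False
proof (cases "m = 0")
  case True
  then have "c = j 0" using cJ kpos by (simp add: J_def)
  then show False using e w2 Esym by blast
next
  case False
  define X2 where "X2 a = (if a \<le> m then X a else {c,w})" for a
  define j2 where "j2 a = (if a \<le> m then J a else w)" for a
  have n2: "2 \<le> Suc (Suc m)" by simp
  have bc: "biconn E (X2 a)" if "a < Suc (Suc m)" for a
    using bic m edge_biconn[OF sg Esym[OF e]] by (auto simp: X2_def)
  have sb: "X2 a \<subseteq> V" if "a < Suc (Suc m)" for a
    using sub m edge_sub[OF sg Esym[OF e]] by (auto simp: X2_def)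
  have jin1: "j2 a \<in> X2 a" if "a < Suc (Suc m)" for a
  proof (cases "a \<le> m")
    case True
    show ?thesis
    proof (cases "a < k")
      case True then show ?thesis using \<open>a \<le> m\<close> jX by (simp add: j2_def X2_def J_def)
    next
      case False then have "a = k" using \<open>a \<le> m\<close> m by simp
      then show ?thesis using \<open>a \<le> m\<close> v0 by (simp add: j2_def X2_def J_def)
    qed
  next
    case False then show ?thesis by (simp add: j2_def X2_def)
  qed
  have jin2: "j2 a \<in> X2 (Suc a mod Suc (Suc m))" if a: "a < Suc (Suc m)" for a
  proof -
    consider "a < m" | "a = m" | "a = Suc m" using a by linarith
    then show ?thesis
    proof cases
      case 1 then show ?thesis using jX' m by (auto simp: j2_def X2_def J_def)
    next
      case 2 then show ?thesis using cJ by (simp add: j2_def X2_def)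
    next
      case 3 then show ?thesis using w0 by (simp add: j2_def X2_def)
    qed
  qed
  have Jinj: "a \<le> k \<Longrightarrow> b \<le> k \<Longrightarrow> J a = J b \<Longrightarrow> a = b" for a b
  proof -
    assume a: "a \<le> k" and b: "b \<le> k" and e: "J a = J b"
    have ca: "a < k \<or> a = k" and cb: "b < k \<or> b = k" using a b by auto
    show "a = b" using ca cb e injj[of a b] vj[of a] vj[of b] by (auto simp: J_def)
  qed
  have wJ: "a \<le> k \<Longrightarrow> w \<noteq> J a" for a using wj W by (auto simp: J_def)
  have inj: "inj_on j2 {..<Suc (Suc m)}"
  proof (rule inj_onI)
    fix a b assume a: "a \<in> {..<Suc (Suc m)}" and b: "b \<in> {..<Suc (Suc m)}" and eq: "j2 a = j2 b"
    show "a = b"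
    proof (cases "a \<le> m")
      case True note aT = True
      show ?thesis
      proof (cases "b \<le> m")
        case True then show ?thesis using aT eq Jinj m by (simp add: j2_def)
      next
        case False then show ?thesis using aT eq wJ[of a] m by (auto simp: j2_def)
      qed
    next
      case False note aF = False
      show ?thesis
      proof (cases "b \<le> m")
        case True then show ?thesis using aF eq wJ[of b] m by (auto simp: j2_def)
      next
        case False then show ?thesis using aF a b by simp
      qed
    qed
  qed
  have c0: "X2 0 = X 0" "X2 1 = X 1" using False by (auto simp: X2_def)
  show False using ring[OF sg n2 bc sb jin1 jin2 inj] b0 b1 X01 c0 by simp
qed

lemma noEww': "\<not> E w w'"
proof
  assume "E w w'"
  moreover have "w' = J k" by (simp add: J_def)
  ultimately show False using F2notJ by blast
qed

lemma F2path: assumes e: "E w c" shows "robber_move E [c] w w'"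
proof -
  define A where "A a b \<longleftrightarrow> E a b \<and> a \<notin> set [c] \<and> b \<notin> set [c]" for a b
  have cj: "c \<noteq> j a" if a: "a < k" for a
  proof
    assume "c = j a"
    then have "c = J a" using a by (simp add: J_def)
    then show False using F2notJ[OF e, of a] a by simp
  qed
  have cw: "c \<noteq> w" using e Eirr by auto
  have cv: "c \<noteq> w'"
  proof
    assume "c = w'"
    then have "c = J k" by (simp add: J_def)
    then show False using F2notJ[OF e, of k] by simp
  qed
  have lift: "A\<^sup>*\<^sup>* x y" if "(\<lambda>a b. E a b \<and> a \<in> S \<and> b \<in> S)\<^sup>*\<^sup>* x y" "c \<notin> S" for S x y
    using that(1) by (rule rel_mono_gen[rotated]) (use that(2) in \<open>auto simp: A_def\<close>)
  have P: "\<forall>x\<in>X i - {c}. A\<^sup>*\<^sup>* w x" if "i \<le> k" for i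
    using that
  proof (induction i)
    case 0
    have cn: "connected_on E (X 0 - {c})" by (rule biconn_minus[OF bic]) simp
    show ?case
    proof
      fix x assume x: "x \<in> X 0 - {c}"
      have wx: "w \<in> X 0 - {c}" using w0 cw by simp
      have "(\<lambda>a b. E a b \<and> a \<in> X 0 - {c} \<and> b \<in> X 0 - {c})\<^sup>*\<^sup>* w x"
        using cn wx x unfolding connected_on_def by blast
      then show "A\<^sup>*\<^sup>* w x" by (rule lift) simp
    qed
  next
    case (Suc i)
    then have ik: "i < k" by simp
    have jii: "j i \<in> X i - {c}" using jX[OF ik] cj[OF ik] by simp
    have 1: "A\<^sup>*\<^sup>* w (j i)" using Suc.IH ik jii by simp
    have ji: "j i \<in> X (Suc i) - {c}" using jX'[OF ik] cj[OF ik] by simp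
    have cn: "connected_on E (X (Suc i) - {c})" by (rule biconn_minus[OF bic]) (use ik in simp)
    show ?case
    proof
      fix x assume x: "x \<in> X (Suc i) - {c}"
      have "(\<lambda>a b. E a b \<and> a \<in> X (Suc i) - {c} \<and> b \<in> X (Suc i) - {c})\<^sup>*\<^sup>* (j i) x"
        using cn ji x unfolding connected_on_def by blast
      then have "A\<^sup>*\<^sup>* (j i) x" by (rule lift) simp
      then show "A\<^sup>*\<^sup>* w x" using 1 by (rule rtranclp_trans[rotated])
    qed
  qed
  have "A\<^sup>*\<^sup>* w w'" using P[of k] v0 cv by simp
  then show ?thesis unfolding robber_move_def A_def .
qed

lemma F1c: assumes e1: "E w c" and e2: "E c w'" shows False
proof -
  have cj: "c \<noteq> j a" if a: "a < k" for a
  proof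
    assume "c = j a"
    then have "c = J a" using a by (simp add: J_def)
    then show False using F2notJ[OF e1, of a] a by simp
  qed
  have cw: "c \<noteq> w" using e1 Eirr by auto
  have cv: "c \<noteq> w'" using e2 Eirr by auto
  define n where "n = k + 3"
  define X2 where "X2 a = (if a \<le> k then X a else if a = Suc k then {w',c} else {c,w})" for a
  define j2 where "j2 a = (if a < k then j a else if a = k then w' else if a = Suc k then c else w)" for a
  have n2: "2 \<le> n" by (simp add: n_def)
  have bc: "biconn E (X2 a)" if "a < n" for a
    using bic edge_biconn[OF sg Esym[OF e1]] edge_biconn[OF sg Esym[OF e2]] by (auto simp: X2_def)
  have sb: "X2 a \<subseteq> V" if "a < n" for a
    using sub edge_sub[OF sg Esym[OF e1]] edge_sub[OF sg Esym[OF e2]] by (auto simp: X2_def)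
  have jin1: "j2 a \<in> X2 a" if "a < n" for a
    using jX v0 by (auto simp: j2_def X2_def)
  have jin2: "j2 a \<in> X2 (Suc a mod n)" if a: "a < n" for a
  proof -
    consider "a < k" | "a = k" | "a = Suc k" | "a = Suc (Suc k)" using a by (simp add: n_def) linarith
    then show ?thesis
    proof cases
      case 1 then show ?thesis using jX' by (auto simp: j2_def X2_def n_def)
    next
      case 2 then show ?thesis by (simp add: j2_def X2_def n_def)
    next
      case 3 then show ?thesis by (simp add: j2_def X2_def n_def)
    next
      case 4 then have "Suc a = n" by (simp add: n_def)
      then have "Suc a mod n = 0" by simp
      then show ?thesis using w0 4 by (simp add: j2_def X2_def)
    qed
  qed
  have inj: "inj_on j2 {..<n}"
  proof (rule inj_onI)
    fix a b assume a: "a \<in> {..<n}" and b: "b \<in> {..<n}" and eq: "j2 a = j2 b"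
    have ca: "a < k \<or> a = k \<or> a = Suc k \<or> a = Suc (Suc k)" using a by (simp add: n_def) linarith
    have cb: "b < k \<or> b = k \<or> b = Suc k \<or> b = Suc (Suc k)" using b by (simp add: n_def) linarith
    show "a = b" using ca cb eq injj[of a b] wj[of a] wj[of b] vj[of a] vj[of b] cj[of a] cj[of b] cw cv W
      by (auto simp: j2_def)
  qed
  have c0: "X2 0 = X 0" "X2 1 = X 1" using kpos by (auto simp: X2_def)
  show False using ring[OF sg n2 bc sb jin1 jin2 inj] b0 b1 X01 c0 by simp
qed

end




lemma adj_isl: "bt_adj V E x y \<Longrightarrow> isl x = (\<not> isl y)"
  by (auto simp: bt_adj_def)
lemma adj_lr: "bt_adj V E (Inl S) (Inr v) \<Longrightarrow> is_block V E S \<and> v \<in> S"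
  by (auto simp: bt_adj_def)
lemma adj_rl: "bt_adj V E (Inr v) (Inl S) \<Longrightarrow> is_block V E S \<and> v \<in> S"
  by (auto simp: bt_adj_def)

lemma hallway_chain:
  assumes h: "is_hallway V E B B'"
  shows "\<exists>k X j w w'. chain V E k X j \<and> w \<in> X 0 \<and> w \<noteq> j 0 \<and> \<not> E (j 0) w
            \<and> w' \<in> X k \<and> w' \<noteq> j (k-1) \<and> \<not> E (j (k-1)) w'"
proof -
  from h obtain p u1 uk where bp: "bt_path V E p" and hd: "hd p = Inl B" and lst: "last p = Inl B'"
    and p1: "p ! 1 = Inr u1" and p2: "p ! (length p - 2) = Inr uk"
    and dh1: "directed_hole V E B u1" and dh2: "directed_hole V E B' uk" and ne: "B \<noteq> B'"
    unfolding is_hallway_def by blast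
  from dh1 obtain w where w: "w \<in> B" "w \<noteq> u1" "\<not> E u1 w" unfolding directed_hole_def by blast
  from dh2 obtain w' where w': "w' \<in> B'" "w' \<noteq> uk" "\<not> E uk w'" unfolding directed_hole_def by blast
  define L where "L = length p"
  have pne: "p \<noteq> []" and dist: "distinct p" and adj: "\<And>i. Suc i < L \<Longrightarrow> bt_adj V E (p ! i) (p ! Suc i)"
    using bp unfolding bt_path_def L_def by auto
  have p0: "p ! 0 = Inl B" using hd pne by (simp add: hd_conv_nth)
  have pl: "p ! (L - 1) = Inl B'" using lst pne by (simp add: last_conv_nth L_def)
  have par: "isl (p ! i) = even i" if "i < L" for i
    using that
  proof (induction i)
    case 0 then show ?case using p0 by simp
  next
    case (Suc i)
    then have "isl (p ! i) = even i" by simp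
    moreover have "isl (p ! i) = (\<not> isl (p ! Suc i))" using adj_isl[OF adj[OF Suc.prems]] .
    ultimately show ?case by (simp only: even_Suc) blast
  qed
  have L0: "0 < L" using pne by (simp add: L_def)
  have L2: "L \<noteq> 1" using p0 pl ne by auto
  have ev: "even (L - 1)" using par[of "L - 1"] pl L0 by simp
  define k where "k = (L - 1) div 2"
  have Lk: "L = 2 * k + 1" using ev L0 unfolding k_def by auto
  have k1: "1 \<le> k" using Lk L2 L0 by (cases k) auto
  define X where "X i = projl (p ! (2 * i))" for i
  define j where "j i = projr (p ! (2 * i + 1))" for i
  have pX: "p ! (2 * i) = Inl (X i)" if "i \<le> k" for i
  proof -
    have "isl (p ! (2 * i))" using par[of "2 * i"] that Lk by simp
    then show ?thesis unfolding X_def by simp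
  qed
  have pj: "p ! (2 * i + 1) = Inr (j i)" if "i < k" for i
  proof -
    have "\<not> isl (p ! (2 * i + 1))" using par[of "2 * i + 1"] that Lk by simp
    then show ?thesis unfolding j_def by (cases "p ! (2 * i + 1)") auto
  qed
  have a1: "is_block V E (X i) \<and> j i \<in> X i" if "i < k" for i
  proof -
    have "bt_adj V E (p ! (2 * i)) (p ! Suc (2 * i))" using adj that Lk by simp
    then show ?thesis using pX[of i] pj[OF that] that by (simp add: adj_lr)
  qed
  have a2: "is_block V E (X (Suc i)) \<and> j i \<in> X (Suc i)" if "i < k" for i
  proof -
    have "bt_adj V E (p ! (2 * i + 1)) (p ! Suc (2 * i + 1))" using adj that Lk by simp
    moreover have "Suc (2 * i + 1) = 2 * Suc i" by simp
    ultimately show ?thesis using pX[of "Suc i"] pj[OF that] that by (simp add: adj_rl)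
  qed
  have ch: "chain V E k X j" unfolding chain_def
  proof (intro conjI allI impI)
    show "1 \<le> k" by (rule k1)
  next
    fix i assume i: "i \<le> k"
    show "is_block V E (X i)"
    proof (cases "i < k")
      case True then show ?thesis using a1 by simp
    next
      case False then have "i = Suc (k - 1)" using i k1 by simp
      then show ?thesis using a2[of "k - 1"] k1 by simp
    qed
  next
    show "inj_on X {..k}"
    proof (rule inj_onI)
      fix a b assume a: "a \<in> {..k}" and b: "b \<in> {..k}" and e: "X a = X b"
      then have "p ! (2 * a) = p ! (2 * b)" using pX by simp
      moreover have "2 * a < length p" "2 * b < length p" using a b Lk L_def by auto
      ultimately have "2 * a = 2 * b" using dist nth_eq_iff_index_eq by blast
      then show "a = b" by simp
    qed
  next
    show "inj_on j {..<k}"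
    proof (rule inj_onI)
      fix a b assume a: "a \<in> {..<k}" and b: "b \<in> {..<k}" and e: "j a = j b"
      then have "p ! (2 * a + 1) = p ! (2 * b + 1)" using pj by simp
      moreover have "2 * a + 1 < length p" "2 * b + 1 < length p" using a b Lk L_def by auto
      ultimately have "2 * a + 1 = 2 * b + 1" using dist nth_eq_iff_index_eq by blast
      then show "a = b" by simp
    qed
  next
    fix i assume "i < k" then show "j i \<in> X i" using a1 by simp
  next
    fix i assume "i < k" then show "j i \<in> X (Suc i)" using a2 by simp
  qed
  have X0: "X 0 = B" using pX[of 0] p0 by simp
  have Xk: "X k = B'" using pX[of k] pl Lk by simp
  have j0: "j 0 = u1" using pj[of 0] p1 k1 by simp
  have jk: "j (k - 1) = uk"
  proof -
    have "2 * (k - 1) + 1 = length p - 2" using Lk k1 L_def by simp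
    then show ?thesis using pj[of "k - 1"] p2 k1 by simp
  qed
  show ?thesis using ch w w' X0 Xk j0 jk by blast
qed

lemma cop_move1: "cop_move E [c] C' \<Longrightarrow> \<exists>c'. C' = [c'] \<and> (c' = c \<or> E c c')"
  unfolding cop_move_def by (cases C') auto

lemma robber_wins:
  assumes wV: "w \<in> V" and vV: "w' \<in> V"
    and F1: "\<And>c. (c = w \<or> E w c) \<Longrightarrow> (c = w' \<or> E w' c) \<Longrightarrow> False"
    and P1: "\<And>c. E w c \<Longrightarrow> robber_move E [c] w w'"
    and P2: "\<And>c. E w' c \<Longrightarrow> robber_move E [c] w' w"
    and sym: "\<And>x y. E x y \<Longrightarrow> E y x"
  shows "\<not> cops_win V E 1"
proof -
  have safe: "\<exists>r'. r' \<in> {w, w'} \<and> robber_move E [c] r r' \<and> r' \<noteq> c \<and> \<not> E r' c"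
    if "r \<in> {w, w'}" "c \<noteq> r" for r c
  proof (cases "E r c")
    case False
    then show ?thesis using that by (intro exI[of _ r]) (auto simp: robber_move_def)
  next
    case True
    show ?thesis
    proof (cases "r = w")
      case rw: True
      then have "E w c" using True by simp
      then show ?thesis using P1 F1[of c] rw sym by (intro exI[of _ w']) blast
    next
      case False
      then have rw: "r = w'" using that by simp
      then have "E w' c" using True by simp
      then show ?thesis using P2 F1[of c] rw sym by (intro exI[of _ w]) blast
    qed
  qed
  have inv: "cop_wins_from E C r \<Longrightarrow> (\<forall>c. C = [c] \<longrightarrow> r \<in> {w, w'} \<longrightarrow> c \<noteq> r \<longrightarrow> False)" for C r
  proof (induction rule: cop_wins_from.induct)
    case (step C r)
    show ?case
    proof (intro allI impI)
      fix c assume C: "C = [c]" and r: "r \<in> {w, w'}" and cr: "c \<noteq> r"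
      obtain r' where r': "r' \<in> {w, w'}" "robber_move E [c] r r'" "r' \<noteq> c" "\<not> E r' c"
        using safe[OF r cr] by blast
      from step[of r'] r'(2) C obtain C' where cm: "cop_move E [c] C'"
        and alt: "r' \<in> set C' \<or> (cop_wins_from E C' r' \<and> (\<forall>c. C' = [c] \<longrightarrow> r' \<in> {w, w'} \<longrightarrow> c \<noteq> r' \<longrightarrow> False))"
        by blast
      from cop_move1[OF cm] obtain c' where c': "C' = [c']" "c' = c \<or> E c c'" by blast
      have "c' \<noteq> r'" using c'(2) r'(3,4) sym by blast
      then show False using alt c' r'(1) by auto
    qed
  qed
  show ?thesis
  proof
    assume "cops_win V E 1"
    then obtain C where C: "length C = 1" "set C \<subseteq> V"
      and win: "\<forall>r\<in>V - set C. \<exists>C'. cop_move E C C' \<and> (r \<in> set C' \<or> cop_wins_from E C' r)"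
      unfolding cops_win_def by blast
    then obtain c0 where c0: "C = [c0]" by (cases C) auto
    obtain r where r: "r \<in> {w, w'}" "r \<noteq> c0" "\<not> E r c0"
      using F1[of c0] sym by blast
    have "r \<in> V - set C" using r wV vV c0 by auto
    then obtain C' where cm: "cop_move E [c0] C'" and alt: "r \<in> set C' \<or> cop_wins_from E C' r"
      using win c0 by blast
    from cop_move1[OF cm] obtain c' where c': "C' = [c']" "c' = c0 \<or> E c0 c'" by blast
    have "c' \<noteq> r" using c'(2) r sym by blast
    then show False using alt c' inv[of "[c']" r] r(1) by auto
  qed
qed

lemma cops_win_exists: "simple_graph V E \<Longrightarrow> cops_win V E (card V)"
proof -
  assume "simple_graph V E"
  then have "finite V" by (simp add: simple_graph_def)
  then obtain xs where "set xs = V" "distinct xs" using finite_distinct_list by blast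
  then show "cops_win V E (card V)" unfolding cops_win_def
    by (intro exI[of _ xs]) (auto simp: distinct_card)
qed

theorem mainTheorem10:
  fixes V :: "'a set" and E :: "'a \<Rightarrow> 'a \<Rightarrow> bool"
  assumes "simple_graph V E"
    and "connected_graph V E"
    and "cop_number_inf V E = 1"
  shows "\<not> has_hallway V E"
proof
  note sg = assms(1)
  have cw1: "cops_win V E 1"
  proof -
    have "cops_win V E (LEAST k. cops_win V E k)"
      using cops_win_exists[OF sg] by (rule LeastI)
    then show ?thesis using assms(3) unfolding cop_number_inf_def by simp
  qed
  assume "has_hallway V E"
  then obtain B B' where hw: "is_hallway V E B B'" unfolding has_hallway_def by blast
  obtain k X j w w' where all: "chain V E k X j \<and> w \<in> X 0 \<and> w \<noteq> j 0 \<and> \<not> E (j 0) w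
            \<and> w' \<in> X k \<and> w' \<noteq> j (k-1) \<and> \<not> E (j (k-1)) w'"
    using hallway_chain[OF hw] by (elim exE) (rule that)
  from all have ch: "chain V E k X j" and w: "w \<in> X 0" "w \<noteq> j 0" "\<not> E (j 0) w"
    and v: "w' \<in> X k" "w' \<noteq> j (k-1)" "\<not> E (j (k-1)) w'" by simp_all
  have k1: "1 \<le> k" using ch by (simp add: chain_def)
  have sym: "\<And>x y. E x y \<Longrightarrow> E y x" using sg by (simp add: simple_graph_def)
  have wV: "w \<in> V" using w(1) block_sub[OF sg] ch unfolding chain_def by blast
  have vV: "w' \<in> V" using v(1) block_sub[OF sg] ch unfolding chain_def by blast
  have W: "w \<noteq> w'" by (rule W[OF sg ch w v])
  have nE: "\<not> E w w'" by (rule noEww'[OF sg ch w v])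
  have F1: False if "c = w \<or> E w c" "c = w' \<or> E w' c" for c
  proof -
    from that(1) show False
    proof
      assume cw: "c = w"
      from that(2) show False
      proof
        assume "c = w'" then show False using cw W by simp
      next
        assume "E w' c" then have "E w w'" using cw sym by blast
        then show False using nE by simp
      qed
    next
      assume e1: "E w c"
      from that(2) show False
      proof
        assume "c = w'" then show False using e1 nE by simp
      next
        assume "E w' c" then have "E c w'" using sym by blast
        then show False using F1c[OF sg ch w v e1] by simp
      qed
    qed
  qed
  have P1: "robber_move E [c] w w'" if "E w c" for c
    by (rule F2path[OF sg ch w v that])
  have rch: "chain V E k (\<lambda>i. X (k - i)) (\<lambda>i. j (k - Suc i))" by (rule rev_chain[OF ch])
  have P2: "robber_move E [c] w' w" if e: "E w' c" for c
  proof (rule F2path[OF sg rch])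
    show "w' \<in> X (k - 0)" using v by simp
    show "w' \<noteq> j (k - Suc 0)" using v by simp
    show "\<not> E (j (k - Suc 0)) w'" using v by simp
    show "w \<in> X (k - k)" using w by simp
    show "w \<noteq> j (k - Suc (k - 1))" using w k1 by simp
    show "\<not> E (j (k - Suc (k - 1))) w" using w k1 by simp
    show "E w' c" by (rule e)
  qed
  have "\<not> cops_win V E 1" by (rule robber_wins[OF wV vV F1 P1 P2 sym])
  then show False using cw1 by simp
qed


end
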